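(* Let $n\ge 2$, let $\mathbb{F}_q$ be a finite field with $q$ elements, let $UU_n(\mathbb{F}_q)$ be the group of $n\times n$ upper triangular unipotent matrices over $\mathbb{F}_q$, and let \[S_0=\{A=(a_{ij})\in UU_n(\mathbb{F}_q): \textstyle\prod_{i=1}^{n-1}a_{i,i+1}\neq 0\}.\] Then $\omega(S_0)=(q-1)^{n-2}q^{\binom{n-2}{2}}$.
   Context: A subset $N$ of a group is non-commuting if $xy\ne yx$ for all distinct $x,y\in N$; for a subset $S$ of a group, $\omega(S)$ is the maximum cardinality of a non-commuting subset of $S$. *)

theory Defs
  imports "Jordan_Normal_Form.Matrix"
begin

definition non_commuting :: "'a::times set \<Rightarrow> bool" where
  "non_commuting N \<longleftrightarrow> (\<forall>x\<in>N. \<forall>y\<in>N. x \<noteq> y \<longrightarrow> x * y \<noteq> y * x)"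

definition omega :: "'a::times set \<Rightarrow> nat" where
  "omega S = Max {card N | N. N \<subseteq> S \<and> finite N \<and> non_commuting N}"

definition UU :: "nat \<Rightarrow> 'a::{zero,one} mat set" where
  "UU n = {A \<in> carrier_mat n n. upper_triangular A \<and> (\<forall>i<n. A $$ (i,i) = 1)}"

text \<open>S_0, with 0-based indices: product of superdiagonal entries nonzero.\<close>
definition S0 :: "nat \<Rightarrow> 'a::{comm_semiring_1} mat set" where
  "S0 n = {A \<in> UU n. (\<Prod>i<n-1. A $$ (i, i+1)) \<noteq> 0}"

end

theory Submission
  imports Defs "HOL-Library.FuncSet"
begin

lemma mult_entry:
  assumes "A \<in> carrier_mat n n" "B \<in> carrier_mat n n" "i < n" "j < n"
  shows "(A*B)$$(i,j) = (\<Sum>k<n. A$$(i,k) * B$$(k,j))"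
  using assms by (simp add: scalar_prod_def atLeast0LessThan)

definition regN :: "nat \<Rightarrow> 'a::field mat \<Rightarrow> bool" where
  "regN n N \<longleftrightarrow> N \<in> carrier_mat n n \<and> (\<forall>i j. i < n \<longrightarrow> j \<le> i \<longrightarrow> N$$(i,j) = 0)
     \<and> (\<forall>i. Suc i < n \<longrightarrow> N$$(i, Suc i) \<noteq> 0)"

lemma sum_single:
  assumes "j < (n::nat)" "\<And>k. k < n \<Longrightarrow> k \<noteq> j \<Longrightarrow> f k = 0"
  shows "(\<Sum>k<n. f k) = (f j :: 'a::comm_monoid_add)"
proof -
  have "sum f {..<n} = sum f {j}" by (rule sum.mono_neutral_right) (use assms in auto)
  then show ?thesis by simp
qed

lemma KL:
  fixes A N :: "'a::field mat"
  assumes N: "regN n N" and A: "A \<in> carrier_mat n n" and c: "A * N = N * A"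
    and lc: "\<And>i. i < n \<Longrightarrow> A$$(i, n-1) = 0"
  shows "A = 0\<^sub>m n n"
proof -
  have Nc: "N \<in> carrier_mat n n" using N by (simp add: regN_def)
  have row: "\<forall>j<n. A$$(i,j) = 0" if ii: "i < n" and hyp: "\<And>i' j. i < i' \<Longrightarrow> i' < n \<Longrightarrow> j < n \<Longrightarrow> A$$(i',j) = 0" for i
  proof -
    have z: "(\<Sum>k<n. A$$(i,k) * N$$(k,j)) = 0" if j: "j < n" for j
    proof -
      have "(\<Sum>k<n. A$$(i,k) * N$$(k,j)) = (A*N)$$(i,j)" using mult_entry[OF A Nc \<open>i<n\<close> j] by simp
      also have "\<dots> = (N*A)$$(i,j)" using c by simp
      also have "\<dots> = (\<Sum>k<n. N$$(i,k) * A$$(k,j))" using mult_entry[OF Nc A \<open>i<n\<close> j] by simp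
      also have "\<dots> = 0"
      proof (rule sum.neutral, intro ballI)
        fix k assume k: "k \<in> {..<n}"
        show "N$$(i,k) * A$$(k,j) = 0"
        proof (cases "k \<le> i")
          case True then show ?thesis using N \<open>i<n\<close> by (simp add: regN_def)
        next
          case False then show ?thesis using hyp[of k j] k j by simp
        qed
      qed
      finally show ?thesis .
    qed
    have "\<forall>j'<Suc j. A$$(i,j') = 0" if "Suc j < n" for j
      using that
    proof (induction j)
      case 0
      have "(\<Sum>k<n. A$$(i,k) * N$$(k,1)) = A$$(i,0) * N$$(0,1)"
        by (rule sum_single) (use 0 N in \<open>auto simp: regN_def\<close>)
      then show ?case using z[of 1] 0 N by (auto simp: regN_def)
    next
      case (Suc j)
      then have ih: "\<forall>j'<Suc j. A$$(i,j') = 0" by simp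
      have "(\<Sum>k<n. A$$(i,k) * N$$(k,Suc (Suc j))) = A$$(i,Suc j) * N$$(Suc j,Suc (Suc j))"
      proof (rule sum_single)
        show "Suc j < n" using Suc by simp
        fix k assume "k < n" "k \<noteq> Suc j"
        then show "A$$(i,k) * N$$(k,Suc (Suc j)) = 0"
          using ih N by (cases "k < Suc j") (auto simp: regN_def)
      qed
      then have "A$$(i,Suc j) = 0" using z[of "Suc (Suc j)"] Suc.prems N by (auto simp: regN_def)
      then show ?case using ih less_Suc_eq by auto
    qed
    then show ?thesis
      using lc[OF \<open>i<n\<close>] 
      by (metis Suc_pred' add_diff_cancel_left' bot_nat_0.not_eq_extremum diff_diff_cancel
          less_SucE less_Suc_eq_0_disj not_less_eq plus_1_eq_Suc)
  qed
  have all: "\<forall>j<n. A$$(n - d, j) = 0" if "n - d < n" for d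
    using that
  proof (induction d rule: less_induct)
    case (less d)
    show ?case
    proof (rule row)
      show "n - d < n" by fact
      fix i' j assume "n - d < i'" "i' < n" "j < n"
      then have "i' = n - (n - i')" "n - i' < d" by auto
      then show "A$$(i',j) = 0" using less.IH[of "n - i'"] \<open>i'<n\<close> \<open>j<n\<close> by auto
    qed
  qed
  show ?thesis
  proof (rule eq_matI)
    fix i j assume "i < dim_row (0\<^sub>m n n :: 'a mat)" "j < dim_col (0\<^sub>m n n :: 'a mat)"
    then show "A$$(i,j) = 0\<^sub>m n n $$ (i,j)" using all[of "n - i"] by simp
  qed (use A in auto)
qed

inductive_set pol :: "nat \<Rightarrow> 'a::field mat \<Rightarrow> 'a mat set" for n N where
  one: "1\<^sub>m n \<in> pol n N"
| mulN: "A \<in> pol n N \<Longrightarrow> N * A \<in> pol n N"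
| add: "A \<in> pol n N \<Longrightarrow> B \<in> pol n N \<Longrightarrow> A + B \<in> pol n N"
| smult: "A \<in> pol n N \<Longrightarrow> c \<cdot>\<^sub>m A \<in> pol n N"

lemma pol_carrier:
  assumes "N \<in> carrier_mat n n" "A \<in> pol n N" shows "A \<in> carrier_mat n n"
  using assms(2) by induction (use assms(1) in auto)

lemma pol_comm_gen:
  assumes N: "N \<in> carrier_mat n n" and B: "B \<in> carrier_mat n n" and BN: "B * N = N * B"
    and A: "A \<in> pol n N"
  shows "A * B = B * A"
  using A
proof induction
  case one then show ?case using B by simp
next
  case (mulN A)
  have Ac: "A \<in> carrier_mat n n" using pol_carrier[OF N mulN(1)] .
  have "(N * A) * B = N * (A * B)" using Ac N B by simp
  also have "\<dots> = N * (B * A)" using mulN by simp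
  also have "\<dots> = (N * B) * A" using Ac N B by simp
  also have "\<dots> = (B * N) * A" using BN by simp
  also have "\<dots> = B * (N * A)" using Ac N B by simp
  finally show ?case .
next
  case (add A C)
  have Ac: "A \<in> carrier_mat n n" using pol_carrier[OF N add(1)] .
  have Cc: "C \<in> carrier_mat n n" using pol_carrier[OF N add(2)] .
  have "(A + C) * B = A * B + C * B" using Ac Cc B by (simp add: add_mult_distrib_mat)
  also have "\<dots> = B * A + B * C" using add by simp
  also have "\<dots> = B * (A + C)" using Ac Cc B by (simp add: mult_add_distrib_mat)
  finally show ?case .
next
  case (smult A c)
  have Ac: "A \<in> carrier_mat n n" using pol_carrier[OF N smult(1)] .
  have "(c \<cdot>\<^sub>m A) * B = c \<cdot>\<^sub>m (A * B)" using Ac B by (simp add: mult_smult_assoc_mat)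
  also have "\<dots> = c \<cdot>\<^sub>m (B * A)" using smult by simp
  also have "\<dots> = B * (c \<cdot>\<^sub>m A)" using Ac B by (simp add: mult_smult_distrib)
  finally show ?case .
qed

lemma pol_commN:
  assumes N: "N \<in> carrier_mat n n" and A: "A \<in> pol n N"
  shows "A * N = N * A"
  using pol_comm_gen[OF N N refl A] .

lemma pol_inv:
  assumes N: "regN n N" and A: "A \<in> pol n N"
  shows "(\<forall>i j. i < n \<longrightarrow> j < i \<longrightarrow> A$$(i,j) = 0) \<and>
    (\<exists>c d. (\<forall>i<n. A$$(i,i) = c) \<and> (\<forall>i. Suc i < n \<longrightarrow> A$$(i,Suc i) = d * N$$(i,Suc i)))"
  using A
proof induction
  case one then show ?case by (intro conjI exI[of _ 1] exI[of _ 0]) auto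
next
  case (mulN A)
  have Nc: "N \<in> carrier_mat n n" using N by (simp add: regN_def)
  have Ac: "A \<in> carrier_mat n n" using pol_carrier[OF Nc mulN(1)] .
  from mulN(2) obtain c d where ut: "\<forall>i j. i < n \<longrightarrow> j < i \<longrightarrow> A$$(i,j) = 0"
    and c: "\<forall>i<n. A$$(i,i) = c" by blast
  have z: "(N*A)$$(i,j) = 0" if "i < n" "j \<le> i" for i j
  proof -
    have "(N*A)$$(i,j) = (\<Sum>k<n. N$$(i,k) * A$$(k,j))" using mult_entry[OF Nc Ac] that by simp
    also have "\<dots> = 0"
    proof (rule sum.neutral, intro ballI)
      fix k assume k: "k \<in> {..<n}"
      show "N$$(i,k) * A$$(k,j) = 0"
      proof (cases "k \<le> i")
        case True then show ?thesis using N that by (simp add: regN_def)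
      next
        case False then show ?thesis using ut that k by simp
      qed
    qed
    finally show ?thesis .
  qed
  have s: "(N*A)$$(i,Suc i) = c * N$$(i,Suc i)" if "Suc i < n" for i
  proof -
    have "(N*A)$$(i,Suc i) = (\<Sum>k<n. N$$(i,k) * A$$(k,Suc i))" using mult_entry[OF Nc Ac] that by simp
    also have "\<dots> = N$$(i,Suc i) * A$$(Suc i,Suc i)"
    proof (rule sum_single)
      fix k assume "k < n" "k \<noteq> Suc i"
      then show "N$$(i,k) * A$$(k,Suc i) = 0" using N ut that
        by (cases "k \<le> i") (auto simp: regN_def not_le)
    qed (use that in auto)
    finally show ?thesis using c that by simp
  qed
  show ?case using z s by (intro conjI exI[of _ 0] exI[of _ c]) auto
next
  case (add A B)
  have Nc: "N \<in> carrier_mat n n" using N by (simp add: regN_def)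
  have Ac: "A \<in> carrier_mat n n" using pol_carrier[OF Nc add(1)] .
  have Bc: "B \<in> carrier_mat n n" using pol_carrier[OF Nc add(2)] .
  from add(3) obtain c d where a1: "\<forall>i j. i < n \<longrightarrow> j < i \<longrightarrow> A$$(i,j) = 0"
    and a2: "\<forall>i<n. A$$(i,i) = c" and a3: "\<forall>i. Suc i < n \<longrightarrow> A$$(i,Suc i) = d * N$$(i,Suc i)" by blast
  from add(4) obtain c' d' where b1: "\<forall>i j. i < n \<longrightarrow> j < i \<longrightarrow> B$$(i,j) = 0"
    and b2: "\<forall>i<n. B$$(i,i) = c'" and b3: "\<forall>i. Suc i < n \<longrightarrow> B$$(i,Suc i) = d' * N$$(i,Suc i)" by blast
  show ?case using Ac Bc a1 a2 a3 b1 b2 b3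
    by (intro conjI exI[of _ "c + c'"] exI[of _ "d + d'"]) (auto simp: distrib_right)
next
  case (smult A e)
  have Nc: "N \<in> carrier_mat n n" using N by (simp add: regN_def)
  have Ac: "A \<in> carrier_mat n n" using pol_carrier[OF Nc smult(1)] .
  from smult(2) obtain c d where a1: "\<forall>i j. i < n \<longrightarrow> j < i \<longrightarrow> A$$(i,j) = 0"
    and a2: "\<forall>i<n. A$$(i,i) = c" and a3: "\<forall>i. Suc i < n \<longrightarrow> A$$(i,Suc i) = d * N$$(i,Suc i)" by blast
  show ?case using Ac a1 a2 a3
    by (intro conjI exI[of _ "e * c"] exI[of _ "e * d"]) auto
qed

lemma pol_step:
  assumes N: "regN n N" and k: "k < n"
  shows "\<exists>A\<in>pol n N. (\<forall>i<n. n - 1 - k < i \<longrightarrow> A$$(i,n-1) = 0) \<and> A$$(n - 1 - k, n - 1) \<noteq> 0"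
  using k
proof (induction k)
  case 0 then show ?case by (intro bexI[of _ "1\<^sub>m n"]) (auto intro: pol.one)
next
  case (Suc k)
  have Nc: "N \<in> carrier_mat n n" using N by (simp add: regN_def)
  from Suc obtain A where A: "A \<in> pol n N" and a1: "\<forall>i<n. n - 1 - k < i \<longrightarrow> A$$(i,n-1) = 0"
    and a2: "A$$(n - 1 - k, n - 1) \<noteq> 0" by auto
  have Ac: "A \<in> carrier_mat n n" using pol_carrier[OF Nc A] .
  define t where "t = n - 1 - k"
  have t: "t = Suc (n - 1 - Suc k)" "t < n" using Suc.prems by (auto simp: t_def)
  have z: "(N*A)$$(i,n-1) = 0" if "i < n" "n - 1 - Suc k < i" for i
  proof -
    have "(N*A)$$(i,n-1) = (\<Sum>m<n. N$$(i,m) * A$$(m,n-1))" using mult_entry[OF Nc Ac] that by simp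
    also have "\<dots> = 0"
      by (rule sum.neutral) (use N a1 that t in \<open>auto simp: regN_def not_le t_def\<close>)
    finally show ?thesis .
  qed
  have s: "(N*A)$$(n - 1 - Suc k,n-1) = N$$(n - 1 - Suc k, t) * A$$(t,n-1)"
  proof -
    have "(N*A)$$(n - 1 - Suc k,n-1) = (\<Sum>m<n. N$$(n - 1 - Suc k,m) * A$$(m,n-1))"
      using mult_entry[OF Nc Ac] t Suc.prems by simp
    also have "\<dots> = N$$(n - 1 - Suc k, t) * A$$(t,n-1)"
    proof (rule sum_single)
      fix m assume m: "m < n" "m \<noteq> t"
      show "N$$(n - 1 - Suc k,m) * A$$(m,n-1) = 0"
      proof (cases "m < t")
        case True then have "m \<le> n - 1 - Suc k" using t by simp
        then show ?thesis using N m t by (auto simp: regN_def)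
      next
        case False then have "t < m" using m by simp
        then show ?thesis using a1 m by (auto simp: t_def)
      qed
    qed (use t in auto)
    finally show ?thesis .
  qed
  have "N$$(n - 1 - Suc k, t) \<noteq> 0" using N t by (auto simp: regN_def)
  then have "(N*A)$$(n - 1 - Suc k,n-1) \<noteq> 0" using s a2 by (simp add: t_def)
  then show ?case using z by (intro bexI[of _ "N * A"]) (auto intro: pol.mulN A)
qed

lemma pol_span:
  assumes N: "regN n N" and m: "m \<le> n"
  shows "\<forall>w. (\<forall>i<n. m \<le> i \<longrightarrow> w i = 0) \<longrightarrow> (\<exists>A\<in>pol n N. \<forall>i<n. A$$(i,n-1) = w i)"
  using m
proof (induction m)
  case 0
  show ?case
  proof (intro allI impI)
    fix w :: "nat \<Rightarrow> 'a" assume "\<forall>i<n. 0 \<le> i \<longrightarrow> w i = 0"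
    then show "\<exists>A\<in>pol n N. \<forall>i<n. A$$(i,n-1) = w i"
      by (intro bexI[of _ "0 \<cdot>\<^sub>m 1\<^sub>m n"]) (auto intro: pol.smult pol.one)
  qed
next
  case (Suc m)
  have Nc: "N \<in> carrier_mat n n" using N by (simp add: regN_def)
  show ?case
  proof (intro allI impI)
    fix w :: "nat \<Rightarrow> 'a" assume w: "\<forall>i<n. Suc m \<le> i \<longrightarrow> w i = 0"
    obtain A0 where A0: "A0 \<in> pol n N" and v1: "\<forall>i<n. n - 1 - (n - 1 - m) < i \<longrightarrow> A0$$(i,n-1) = 0"
      and v2: "A0$$(n - 1 - (n - 1 - m), n - 1) \<noteq> 0"
      using pol_step[OF N, of "n - 1 - m"] Suc.prems by auto
    have mm: "n - 1 - (n - 1 - m) = m" using Suc.prems by simp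
    have A0c: "A0 \<in> carrier_mat n n" using pol_carrier[OF Nc A0] .
    define c where "c = w m / A0$$(m,n-1)"
    define w' where "w' i = w i - c * A0$$(i,n-1)" for i
    have "\<forall>i<n. m \<le> i \<longrightarrow> w' i = 0"
    proof (intro allI impI)
      fix i assume i: "i < n" "m \<le> i"
      show "w' i = 0"
      proof (cases "i = m")
        case True then show ?thesis using v2 mm by (simp add: w'_def c_def)
      next
        case False then show ?thesis using v1 mm w i by (simp add: w'_def)
      qed
    qed
    then obtain A' where A': "A' \<in> pol n N" and a': "\<forall>i<n. A'$$(i,n-1) = w' i"
      using Suc.IH Suc.prems by auto
    have A'c: "A' \<in> carrier_mat n n" using pol_carrier[OF Nc A'] .
    show "\<exists>A\<in>pol n N. \<forall>i<n. A$$(i,n-1) = w i"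
    proof (intro bexI[of _ "A' + c \<cdot>\<^sub>m A0"] allI impI)
      fix i assume "i < n"
      then show "(A' + c \<cdot>\<^sub>m A0)$$(i,n-1) = w i" using A'c A0c a' by (simp add: w'_def)
    qed (intro pol.add pol.smult A' A0)
  qed
qed

lemma centralizer_pol:
  assumes N: "regN n N" and n: "n \<ge> 1" and X: "X \<in> carrier_mat n n" and XN: "X * N = N * X"
  shows "X \<in> pol n N"
proof -
  have Nc: "N \<in> carrier_mat n n" using N by (simp add: regN_def)
  obtain A where A: "A \<in> pol n N" and a: "\<forall>i<n. A$$(i,n-1) = X$$(i,n-1)"
    using pol_span[OF N order.refl, rule_format, of "\<lambda>i. X$$(i,n-1)"] by auto
  have Ac: "A \<in> carrier_mat n n" using pol_carrier[OF Nc A] .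
  have "(X - A) * N = X * N - A * N" using X Ac Nc by (simp add: minus_mult_distrib_mat)
  also have "\<dots> = N * X - N * A" using XN pol_commN[OF Nc A] by simp
  also have "\<dots> = N * (X - A)" using X Ac Nc by (simp add: mult_minus_distrib_mat)
  finally have comm: "(X - A) * N = N * (X - A)" .
  have "X - A = 0\<^sub>m n n"
    by (rule KL[OF N _ comm]) (use X Ac a in auto)
  then have "X = A"
  proof (intro eq_matI)
    fix i j assume ij: "i < dim_row A" "j < dim_col A"
    assume "X - A = 0\<^sub>m n n"
    then have "(X - A) $$ (i,j) = 0\<^sub>m n n $$ (i,j)" by simp
    then show "X $$ (i,j) = A $$ (i,j)" using X Ac ij by simp
  qed (use X Ac in auto)
  then show ?thesis using A by simp
qed

lemma centralizer_comm:
  assumes N: "regN n N" and n: "n \<ge> 1" and X: "X \<in> carrier_mat n n" and XN: "X * N = N * X"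
    and Y: "Y \<in> carrier_mat n n" and YN: "Y * N = N * Y"
  shows "X * Y = Y * X"
  using pol_comm_gen[OF _ Y YN centralizer_pol[OF N n X XN]] N by (simp add: regN_def)

lemma mat_eq_of_minus_zero:
  fixes A B :: "'a::field mat"
  assumes "A \<in> carrier_mat n n" "B \<in> carrier_mat n n" "A - B = 0\<^sub>m n n"
  shows "A = B"
proof (intro eq_matI)
  fix i j assume ij: "i < dim_row B" "j < dim_col B"
  have "(A - B) $$ (i,j) = 0\<^sub>m n n $$ (i,j)" using assms(3) by simp
  then show "A $$ (i,j) = B $$ (i,j)" using assms(1,2) ij by simp
qed (use assms in auto)

lemma comm_minus:
  fixes A B C :: "'a::field mat"
  assumes "A \<in> carrier_mat n n" "B \<in> carrier_mat n n" "C \<in> carrier_mat n n"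
    "A * B = B * A" "A * C = C * A"
  shows "A * (B - C) = (B - C) * A"
  using assms by (simp add: mult_minus_distrib_mat minus_mult_distrib_mat)

lemma comm_add:
  fixes A B C :: "'a::field mat"
  assumes "A \<in> carrier_mat n n" "B \<in> carrier_mat n n" "C \<in> carrier_mat n n"
    "A * B = B * A" "A * C = C * A"
  shows "A * (B + C) = (B + C) * A"
  using assms by (simp add: mult_add_distrib_mat add_mult_distrib_mat)

lemma comm_one:
  fixes A :: "'a::field mat"
  assumes "A \<in> carrier_mat n n" shows "A * 1\<^sub>m n = 1\<^sub>m n * A"
  using assms by simp

lemma S0_carrier: "x \<in> S0 n \<Longrightarrow> x \<in> carrier_mat n n"
  by (simp add: S0_def UU_def)

lemma S0_super:
  assumes "x \<in> S0 n" "Suc i < n" shows "(x :: 'a::field mat) $$ (i, Suc i) \<noteq> 0"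
proof -
  have "(\<Prod>i<n-1. x $$ (i, i+1)) \<noteq> 0" using assms(1) by (simp add: S0_def)
  then show ?thesis using assms(2) by (auto simp: prod_zero_iff)
qed

lemma S0_reg:
  assumes x: "(x :: 'a::field mat) \<in> S0 n" shows "regN n (x - 1\<^sub>m n)"
proof -
  have x': "x \<in> UU n" using x unfolding S0_def by blast
  have xc: "x \<in> carrier_mat n n" and ut: "upper_triangular x" and d: "\<forall>i<n. x $$ (i,i) = 1"
    using x' unfolding UU_def by blast+
  show ?thesis unfolding regN_def
  proof (intro conjI allI impI)
    show "x - 1\<^sub>m n \<in> carrier_mat n n" using xc by (simp add: minus_carrier_mat)
  next
    fix i j assume ij: "i < n" "j \<le> i"
    have e: "(x - 1\<^sub>m n) $$ (i,j) = x $$ (i,j) - 1\<^sub>m n $$ (i,j)" using ij by simp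
    show "(x - 1\<^sub>m n) $$ (i,j) = 0"
    proof (cases "j = i")
      case True then show ?thesis using e d ij by simp
    next
      case False then have "j < i" using ij by simp
      then have "x $$ (i,j) = 0" using ut xc ij by (simp add: upper_triangularD)
      then show ?thesis using e ij \<open>j < i\<close> by simp
    qed
  next
    fix i assume i: "Suc i < n"
    have e: "(x - 1\<^sub>m n) $$ (i,Suc i) = x $$ (i,Suc i) - 1\<^sub>m n $$ (i,Suc i)" using i by simp
    then show "(x - 1\<^sub>m n) $$ (i, Suc i) \<noteq> 0" using i S0_super[OF x i] by simp
  qed
qed

lemma trans_S0:
  fixes x y r :: "'a::field mat"
  assumes r: "r \<in> S0 n" and n: "n \<ge> 1" and x: "x \<in> carrier_mat n n" and y: "y \<in> carrier_mat n n"
    and xr: "x * r = r * x" and yr: "y * r = r * y"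
  shows "x * y = y * x"
proof -
  have rc: "r \<in> carrier_mat n n" using S0_carrier[OF r] .
  have c1: "x * (r - 1\<^sub>m n) = (r - 1\<^sub>m n) * x"
    by (rule comm_minus[OF x rc one_carrier_mat xr comm_one[OF x]])
  have c2: "y * (r - 1\<^sub>m n) = (r - 1\<^sub>m n) * y"
    by (rule comm_minus[OF y rc one_carrier_mat yr comm_one[OF y]])
  show ?thesis by (rule centralizer_comm[OF S0_reg[OF r] n x c1 y c2])
qed

definition R :: "nat \<Rightarrow> 'a::field mat set" where
  "R n = {A \<in> S0 n. (\<forall>i<n-2. A$$(i,n-1) = 0) \<and> A$$(n-2,n-1) = 1}"

lemma R_noncomm:
  fixes r r' :: "'a::field mat"
  assumes n: "n \<ge> 2" and r: "r \<in> R n" and r': "r' \<in> R n" and c: "r * r' = r' * r"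
  shows "r = r'"
proof -
  have rS: "r \<in> S0 n" and r1: "\<forall>i<n-2. r$$(i,n-1) = 0" and r2: "r$$(n-2,n-1) = 1"
    using r unfolding R_def by blast+
  have r'S: "r' \<in> S0 n" and r'1: "\<forall>i<n-2. r'$$(i,n-1) = 0" and r'2: "r'$$(n-2,n-1) = 1"
    using r' unfolding R_def by blast+
  have rc: "r \<in> carrier_mat n n" using S0_carrier[OF rS] .
  have r'c: "r' \<in> carrier_mat n n" using S0_carrier[OF r'S] .
  have r3: "r $$ (n-1,n-1) = 1" using rS n unfolding S0_def UU_def by simp
  have r'3: "r' $$ (n-1,n-1) = 1" using r'S n unfolding S0_def UU_def by simp
  define D where "D = r - r'"
  have Dc: "D \<in> carrier_mat n n" unfolding D_def using rc r'c by (simp add: minus_carrier_mat)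
  have rD: "r * D = D * r" unfolding D_def by (rule comm_minus[OF rc rc r'c refl c])
  have comm: "D * (r - 1\<^sub>m n) = (r - 1\<^sub>m n) * D"
    by (rule comm_minus[OF Dc rc one_carrier_mat rD[symmetric] comm_one[OF Dc]])
  have lc: "D $$ (i, n-1) = 0" if "i < n" for i
  proof -
    have De: "D $$ (i, n-1) = r $$ (i,n-1) - r' $$ (i,n-1)" unfolding D_def using r'c that n by simp
    have "i < n - 2 \<or> i = n - 2 \<or> i = n - 1" using that n by linarith
    then show ?thesis
    proof (elim disjE)
      assume "i < n - 2" then show ?thesis using De r1 r'1 by simp
    next
      assume "i = n - 2" then show ?thesis using De r2 r'2 by simp
    next
      assume "i = n - 1" then show ?thesis using De r3 r'3 by simp
    qed
  qed
  have "D = 0\<^sub>m n n" by (rule KL[OF S0_reg[OF rS] Dc comm lc])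
  then have "r - r' = 0\<^sub>m n n" unfolding D_def .
  then show ?thesis by (rule mat_eq_of_minus_zero[OF rc r'c])
qed

lemma rep_exists:
  fixes x :: "'a::field mat"
  assumes n: "n \<ge> 2" and x: "x \<in> S0 n"
  shows "\<exists>r\<in>R n. x * r = r * x"
proof -
  define N where "N = x - 1\<^sub>m n"
  have N: "regN n N" using S0_reg[OF x] unfolding N_def .
  have xc: "x \<in> carrier_mat n n" using S0_carrier[OF x] .
  have Nc: "N \<in> carrier_mat n n" using N unfolding regN_def by blast
  obtain P where P: "P \<in> pol n N" and p: "\<forall>i<n. P$$(i,n-1) = (if i = n - 2 then 1 else 0)"
    using pol_span[OF N order.refl, rule_format, of "\<lambda>i. if i = n - 2 then 1 else 0"] by auto
  have Pc: "P \<in> carrier_mat n n" using pol_carrier[OF Nc P] .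
  obtain c d where ut: "\<forall>i j. i < n \<longrightarrow> j < i \<longrightarrow> P$$(i,j) = 0"
    and cc: "\<forall>i<n. P$$(i,i) = c" and dd: "\<forall>i. Suc i < n \<longrightarrow> P$$(i,Suc i) = d * N$$(i,Suc i)"
    using pol_inv[OF N P] by blast
  have e: "Suc (n-2) = n-1" "n - 2 < n" "n - 1 < n" "n - 1 \<noteq> n - 2" "Suc (n-2) < n" using n by auto
  have "P$$(n-1,n-1) = 0" using p e by simp
  then have c0: "c = 0" using cc e by simp
  have "P$$(n-2, n-1) = 1" using p e by simp
  then have "d * N$$(n-2, Suc (n-2)) = 1" using dd e by metis
  then have d0: "d \<noteq> 0" by auto
  define r where "r = 1\<^sub>m n + P"
  have rc: "r \<in> carrier_mat n n" using Pc unfolding r_def by (simp add: add_carrier_mat)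
  have ri: "r $$ (i,j) = (if i = j then 1 else 0) + P $$ (i,j)" if "i < n" "j < n" for i j
    using Pc that unfolding r_def by simp
  have Nsup: "N$$(i,Suc i) \<noteq> 0" if "Suc i < n" for i using N that unfolding regN_def by blast
  have rS: "r \<in> S0 n"
    unfolding S0_def UU_def
  proof (intro CollectI conjI allI impI)
    show "r \<in> carrier_mat n n" by fact
    show "upper_triangular r" unfolding upper_triangular_def
    proof (intro allI impI)
      fix i j assume "i < dim_row r" "j < i"
      then have "i < n" "j < n" "j \<noteq> i" using rc by auto
      then show "r $$ (i,j) = 0" using ri ut \<open>j < i\<close> by simp
    qed
    fix i assume "i < n" then show "r $$ (i,i) = 1" using ri cc c0 by simp
  next
    have "\<forall>i\<in>{..<n-1}. r $$ (i, i+1) \<noteq> 0"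
    proof
      fix i assume i: "i \<in> {..<n-1}"
      then have si: "Suc i < n" by auto
      have "r $$ (i, i+1) = P $$ (i, Suc i)" using ri[of i "Suc i"] si by simp
      also have "\<dots> = d * N$$(i,Suc i)" using dd si by blast
      finally show "r $$ (i, i+1) \<noteq> 0" using d0 Nsup[OF si] by simp
    qed
    then show "(\<Prod>i<n-1. r $$ (i, i+1)) \<noteq> 0" by (subst prod_zero_iff) auto
  qed
  have rR: "r \<in> R n" unfolding R_def
  proof (intro CollectI conjI allI impI)
    show "r \<in> S0 n" by fact
    fix i assume i: "i < n - 2"
    then have "i < n" "i \<noteq> n - 1" "i \<noteq> n - 2" by auto
    then show "r $$ (i, n-1) = 0" using ri[of i "n-1"] p e by simp
  next
    show "r $$ (n-2, n-1) = 1" using ri[of "n-2" "n-1"] p e by simp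
  qed
  have PN: "P * N = N * P" using pol_commN[OF Nc P] .
  have c3: "P * (N + 1\<^sub>m n) = (N + 1\<^sub>m n) * P"
    by (rule comm_add[OF Pc Nc one_carrier_mat PN comm_one[OF Pc]])
  have "N + 1\<^sub>m n = x"
  proof (rule eq_matI)
    fix i j assume "i < dim_row x" "j < dim_col x"
    then have "i < n" "j < n" using xc by auto
    then show "(N + 1\<^sub>m n) $$ (i,j) = x $$ (i,j)" using xc unfolding N_def by simp
  qed (use xc in auto)
  then have Px: "P * x = x * P" using c3 by simp
  have "x * (1\<^sub>m n + P) = (1\<^sub>m n + P) * x"
    by (rule comm_add[OF xc one_carrier_mat Pc comm_one[OF xc] Px[symmetric]])
  then have "x * r = r * x" unfolding r_def .
  then show ?thesis using rR by blast
qed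


lemma card_U: "card {(i,j). Suc i < j \<and> j < (k::nat)} = (k - 1) choose 2"
proof (induction k)
  case 0 then show ?case by simp
next
  case (Suc k)
  have eq: "{(i,j). Suc i < j \<and> j < Suc k} = {(i,j). Suc i < j \<and> j < k} \<union> (\<lambda>i. (i,k)) ` {..<k-1}"
    by auto
  have fin: "finite {(i,j). Suc i < j \<and> j < k}"
    by (rule finite_subset[of _ "{..<k} \<times> {..<k}"]) auto
  have disj: "{(i,j). Suc i < j \<and> j < k} \<inter> (\<lambda>i. (i,k)) ` {..<k-1} = {}" by auto
  have ci: "card ((\<lambda>i. (i,k)) ` {..<k-1}) = k - 1"
    by (subst card_image) (auto simp: inj_on_def)
  have "card {(i,j). Suc i < j \<and> j < Suc k} = (k - 1 choose 2) + (k - 1)"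
    unfolding eq using fin disj ci Suc.IH by (subst card_Un_disjoint) auto
  also have "\<dots> = Suc k - 1 choose 2"
  proof (cases k)
    case 0 then show ?thesis by simp
  next
    case (Suc m) then show ?thesis by (simp add: numeral_2_eq_2)
  qed
  finally show ?case .
qed

definition Iset :: "nat \<Rightarrow> (nat \<times> nat) set" where
  "Iset n = {(i,j). i < j \<and> j < n - 1}"

definition Bf :: "nat \<times> nat \<Rightarrow> 'a::field set" where
  "Bf p = (if snd p = Suc (fst p) then UNIV - {0} else UNIV)"

definition hmat :: "nat \<Rightarrow> (nat \<times> nat \<Rightarrow> 'a::field) \<Rightarrow> 'a mat" where
  "hmat n f = mat n n (\<lambda>(i,j). if i = j then 1 else if j = n - 1 then (if i = n - 2 then 1 else 0)
     else if i < j then f (i,j) else 0)"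

lemma finite_Iset: "finite (Iset n)"
  by (rule finite_subset[of _ "{..<n} \<times> {..<n}"]) (auto simp: Iset_def)

lemma R_bij:
  assumes n: "n \<ge> 2"
  shows "bij_betw (\<lambda>A. restrict (\<lambda>p. A $$ p) (Iset n)) (R n :: 'a::field mat set) (PiE (Iset n) Bf)"
proof (rule bij_betw_byWitness[where f' = "hmat n"])
  show "\<forall>A\<in>R n. hmat n (restrict (\<lambda>p. A $$ p) (Iset n)) = (A :: 'a mat)"
  proof
    fix A :: "'a mat" assume A: "A \<in> R n"
    have AS: "A \<in> S0 n" and a1: "\<forall>i<n-2. A$$(i,n-1) = 0" and a2: "A$$(n-2,n-1) = 1"
      using A unfolding R_def by blast+
    have AU: "A \<in> UU n" using AS unfolding S0_def by blast
    have Ac: "A \<in> carrier_mat n n" and ut: "upper_triangular A" and d: "\<forall>i<n. A $$ (i,i) = 1"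
      using AU unfolding UU_def by blast+
    show "hmat n (restrict (\<lambda>p. A $$ p) (Iset n)) = A"
    proof (rule eq_matI)
      fix i j assume "i < dim_row A" "j < dim_col A"
      then have ij: "i < n" "j < n" using Ac by auto
      have hm: "hmat n (restrict (\<lambda>p. A $$ p) (Iset n)) $$ (i,j) =
        (if i = j then 1 else if j = n - 1 then (if i = n - 2 then 1 else 0)
         else if i < j then restrict (\<lambda>p. A $$ p) (Iset n) (i,j) else 0)"
        using ij unfolding hmat_def by simp
      show "hmat n (restrict (\<lambda>p. A $$ p) (Iset n)) $$ (i,j) = A $$ (i,j)"
      proof (cases "i = j")
        case True then show ?thesis using hm d ij by simp
      next
        case ne: False
        show ?thesis
        proof (cases "j = n - 1")
          case True
          show ?thesis
          proof (cases "i = n - 2")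
            case True then show ?thesis using hm a2 \<open>j = n - 1\<close> ne by simp
          next
            case False then have "i < n - 2" using ij ne \<open>j = n - 1\<close> by auto
            then show ?thesis using hm a1 \<open>j = n - 1\<close> ne by simp
          qed
        next
          case jn: False
          show ?thesis
          proof (cases "i < j")
            case True then have "(i,j) \<in> Iset n" using ij jn by (auto simp: Iset_def)
            then show ?thesis using hm ne jn True by simp
          next
            case False then have "j < i" using ne by simp
            then have "A $$ (i,j) = 0" using ut Ac ij by (simp add: upper_triangularD)
            then show ?thesis using hm ne jn False by simp
          qed
        qed
      qed
    qed (use Ac in \<open>auto simp: hmat_def\<close>)
  qed
next
  show "\<forall>f\<in>PiE (Iset n) Bf. restrict (\<lambda>p. hmat n f $$ p) (Iset n) = (f :: nat \<times> nat \<Rightarrow> 'a)"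
  proof
    fix f :: "nat \<times> nat \<Rightarrow> 'a" assume f: "f \<in> PiE (Iset n) Bf"
    show "restrict (\<lambda>p. hmat n f $$ p) (Iset n) = f"
    proof (rule ext)
      fix p :: "nat \<times> nat"
      obtain i j where p: "p = (i,j)" by (cases p)
      show "restrict (\<lambda>p. hmat n f $$ p) (Iset n) p = f p"
      proof (cases "p \<in> Iset n")
        case True
        then have "i < j" "j < n - 1" using p by (auto simp: Iset_def)
        then show ?thesis using True p unfolding hmat_def by simp
      next
        case False then show ?thesis using PiE_arb[OF f False] by simp
      qed
    qed
  qed
next
  show "(\<lambda>A. restrict (\<lambda>p. A $$ p) (Iset n)) ` (R n :: 'a mat set) \<subseteq> PiE (Iset n) Bf"
  proof
    fix g assume "g \<in> (\<lambda>A. restrict (\<lambda>p. A $$ p) (Iset n)) ` (R n :: 'a mat set)"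
    then obtain A :: "'a mat" where A: "A \<in> R n" and g: "g = restrict (\<lambda>p. A $$ p) (Iset n)" by blast
    have AS: "A \<in> S0 n" using A unfolding R_def by blast
    show "g \<in> PiE (Iset n) Bf" unfolding g
    proof (rule restrict_PiE_iff[THEN iffD2], intro ballI)
      fix p assume p: "p \<in> Iset n"
      obtain i j where pij: "p = (i,j)" by (cases p)
      show "A $$ p \<in> Bf p"
      proof (cases "j = Suc i")
        case True
        then have "Suc i < n" using p pij by (auto simp: Iset_def)
        then show ?thesis using S0_super[OF AS] True pij by (simp add: Bf_def)
      next
        case False then show ?thesis using pij by (simp add: Bf_def)
      qed
    qed
  qed
next
  show "hmat n ` PiE (Iset n) Bf \<subseteq> (R n :: 'a mat set)"
  proof
    fix A :: "'a mat" assume "A \<in> hmat n ` PiE (Iset n) Bf"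
    then obtain f :: "nat \<times> nat \<Rightarrow> 'a" where f: "f \<in> PiE (Iset n) Bf" and A: "A = hmat n f" by blast
    have Ac: "A \<in> carrier_mat n n" unfolding A hmat_def by simp
    have hi: "A $$ (i,j) = (if i = j then 1 else if j = n - 1 then (if i = n - 2 then 1 else 0)
         else if i < j then f (i,j) else 0)" if "i < n" "j < n" for i j
      using that unfolding A hmat_def by simp
    have e: "n - 2 \<noteq> n - 1" "n - 2 < n" "n - 1 < n" using n by auto
    have AS: "A \<in> S0 n" unfolding S0_def UU_def
    proof (intro CollectI conjI allI impI)
      show "A \<in> carrier_mat n n" by fact
      show "upper_triangular A" unfolding upper_triangular_def
      proof (intro allI impI)
        fix i j assume "i < dim_row A" "j < i"
        then have "i < n" "j < n" "j \<noteq> i" "\<not> i < j" "j \<noteq> n - 1" using Ac by auto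
        then show "A $$ (i,j) = 0" using hi by simp
      qed
      fix i assume "i < n" then show "A $$ (i,i) = 1" using hi by simp
    next
      have "\<forall>i\<in>{..<n-1}. A $$ (i, i+1) \<noteq> 0"
      proof
        fix i assume "i \<in> {..<n-1}"
        then have i: "Suc i < n" by auto
        show "A $$ (i, i+1) \<noteq> 0"
        proof (cases "Suc i = n - 1")
          case True then have "i = n - 2" by auto
          then show ?thesis using hi[of i "Suc i"] i True by simp
        next
          case False
          then have pI: "(i, Suc i) \<in> Iset n" using i by (auto simp: Iset_def)
          have "f (i, Suc i) \<in> Bf (i, Suc i)" using PiE_mem[OF f pI] .
          then have "f (i, Suc i) \<noteq> 0" by (simp add: Bf_def)
          then show ?thesis using hi[of i "Suc i"] i False by simp
        qed
      qed
      then show "(\<Prod>i<n-1. A $$ (i, i+1)) \<noteq> 0" by (subst prod_zero_iff) auto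
    qed
    show "A \<in> R n" unfolding R_def
    proof (intro CollectI conjI allI impI)
      show "A \<in> S0 n" by fact
      fix i assume "i < n - 2"
      then have "i < n" "i \<noteq> n - 1" "i \<noteq> n - 2" by auto
      then show "A $$ (i, n-1) = 0" using hi e by simp
    next
      show "A $$ (n-2, n-1) = 1" using hi e by simp
    qed
  qed
qed

lemma card_R:
  assumes n: "n \<ge> 2"
  shows "card (R n :: 'a::{field,finite} mat set)
     = (card (UNIV :: 'a set) - 1) ^ (n - 2) * card (UNIV :: 'a set) ^ ((n - 2) choose 2)"
proof -
  let ?q = "card (UNIV :: 'a set)"
  have "card (R n :: 'a mat set) = card (PiE (Iset n) (Bf :: _ \<Rightarrow> 'a set))"
    using bij_betw_same_card[OF R_bij[OF n]] .
  also have "\<dots> = (\<Prod>p\<in>Iset n. card (Bf p :: 'a set))" by (rule card_PiE[OF finite_Iset])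
  also have "\<dots> = (\<Prod>p\<in>Iset n. if snd p = Suc (fst p) then ?q - 1 else ?q)"
    by (rule prod.cong) (auto simp: Bf_def card_Diff_singleton)
  also have "\<dots> = (\<Prod>p\<in>Iset n \<inter> {p. snd p = Suc (fst p)}. ?q - 1) *
                  (\<Prod>p\<in>Iset n \<inter> - {p. snd p = Suc (fst p)}. ?q)"
    by (rule prod.If_cases[OF finite_Iset])
  also have "\<dots> = (?q - 1) ^ card (Iset n \<inter> {p. snd p = Suc (fst p)}) *
                  ?q ^ card (Iset n \<inter> - {p. snd p = Suc (fst p)})" by simp
  also have "Iset n \<inter> {p. snd p = Suc (fst p)} = (\<lambda>i. (i, Suc i)) ` {..<n-2}"
    by (auto simp: Iset_def)
  also have "card \<dots> = n - 2" by (subst card_image) (auto simp: inj_on_def)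
  also have "Iset n \<inter> - {p. snd p = Suc (fst p)} = {(i,j). Suc i < j \<and> j < n - 1}"
    by (auto simp: Iset_def)
  also have "card \<dots> = (n - 2) choose 2" using card_U[of "n-1"] by (simp add: numeral_2_eq_2)
  finally show ?thesis .
qed

theorem theorem3p5:
  fixes n :: nat
  assumes "n \<ge> 2"
  shows "omega (S0 n :: 'a::{field,finite} mat set)
           = (card (UNIV :: 'a set) - 1) ^ (n - 2) * card (UNIV :: 'a set) ^ ((n - 2) choose 2)"
proof -
  have n: "n \<ge> 2" by fact
  have n1: "n \<ge> 1" using n by simp
  have "finite (PiE (Iset n) (Bf :: _ \<Rightarrow> 'a set))" by (rule finite_PiE[OF finite_Iset]) simp
  then have finR: "finite (R n :: 'a mat set)"
    using bij_betw_finite[OF R_bij[OF n]] by blast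
  have RS: "R n \<subseteq> (S0 n :: 'a mat set)" unfolding R_def by blast
  have ncR: "non_commuting (R n :: 'a mat set)"
    unfolding non_commuting_def using R_noncomm[OF n] by blast
  have le: "card X \<le> card (R n :: 'a mat set)"
    if X: "X \<subseteq> S0 n" "finite X" "non_commuting X" for X :: "'a mat set"
  proof -
    define f where "f x = (SOME r. r \<in> R n \<and> x * r = r * x)" for x :: "'a mat"
    have fx: "f x \<in> R n \<and> x * f x = f x * x" if "x \<in> X" for x
      unfolding f_def by (rule someI_ex) (use rep_exists[OF n] X that in blast)
    have "inj_on f X"
    proof (rule inj_onI)
      fix x y assume xy: "x \<in> X" "y \<in> X" "f x = f y"
      have rS: "f x \<in> S0 n" using fx[OF xy(1)] RS by blast
      have xc: "x \<in> carrier_mat n n" "y \<in> carrier_mat n n" using X xy S0_carrier by blast+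
      have "x * y = y * x"
        by (rule trans_S0[OF rS n1 xc]) (use fx[OF xy(1)] fx[OF xy(2)] xy(3) in auto)
      then show "x = y" using X(3) xy unfolding non_commuting_def by blast
    qed
    moreover have "f ` X \<subseteq> R n" using fx by blast
    ultimately show ?thesis using card_inj_on_le finR by blast
  qed
  have "omega (S0 n :: 'a mat set) = card (R n :: 'a mat set)"
    unfolding omega_def
  proof (rule Max_eqI)
    show "finite {card N | N. N \<subseteq> (S0 n :: 'a mat set) \<and> finite N \<and> non_commuting N}"
      by (rule finite_subset[of _ "{..card (R n :: 'a mat set)}"]) (use le in auto)
  next
    fix y assume "y \<in> {card N | N. N \<subseteq> (S0 n :: 'a mat set) \<and> finite N \<and> non_commuting N}"
    then show "y \<le> card (R n :: 'a mat set)" using le by blast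
  next
    show "card (R n :: 'a mat set) \<in> {card N | N. N \<subseteq> (S0 n :: 'a mat set) \<and> finite N \<and> non_commuting N}"
      using RS finR ncR by blast
  qed
  then show ?thesis using card_R[OF n] by simp
qed

end
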